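(* Let $\mathsf{L}\in\{\mathbf{PD},\mathsf{InqL},\mathbf{PT}\}$. For every formula $\phi$ in the language of $\mathsf{L}$, every flat substitution $\sigma$ of $\mathsf{L}$ and every team $X$: $X\models\sigma(\phi)$ if and only if $X_\sigma\models\phi$.
   Context: Fix a countably infinite set Prop of propositional variables. A valuation is a function $v:\mathrm{Prop}\to\{0,1\}$; a team is a set of valuations. Formulas of $\mathbf{PT}$: $\phi::=p\mid\bot\mid\top\mid\,=\!(\phi_1,\dots,\phi_n,\phi)\mid\neg\phi\mid\phi\wedge\phi\mid\phi\otimes\phi\mid\phi\vee\phi\mid\phi\to\phi$. Satisfaction on a team $X$: $X\models p$ iff $v(p)=1$ for all $v\in X$; $X\models\bot$ iff $X=\emptyset$; $X\models\top$ always; $\wedge$ is conjunction of conditions; $X\models\phi\otimes\psi$ iff $X=Y\cup Z$ with $Y\models\phi$, $Z\models\psi$; $X\models\phi\vee\psi$ iff $X\models\phi$ or $X\models\psi$; $X\models\phi\to\psi$ iff every $Y\subseteq X$ with $Y\models\phi$ satisfies $\psi$; $X\models\neg\phi$ iff $\{v\}\not\models\phi$ for all $v\in X$; $X\models\,=\!(\phi_1,\dots,\phi_n,\psi)$ iff $X\models\bigwedge_i(\phi_i\vee(\phi_i\to\bot))\to(\psi\vee(\psi\to\bot))$. $\phi$ is flat if for all teams $X$: $X\models\phi$ iff $\{v\}\models\phi$ for all $v\in X$. Formulas of $\mathbf{PD}$: $\phi::=p\mid\bot\mid\top\mid\,=\!(\vec\alpha,\beta)\mid\neg\phi\mid\phi\wedge\phi\mid\phi\otimes\phi$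 with $\vec\alpha,\beta$ flat, evaluated by the same clauses, where for $\mathbf{PD}$ the dependence clause is: $X\models\,=\!(\vec\alpha,\beta)$ iff for all $v,v'\in X$, if $\{v\}\models\alpha_i\Leftrightarrow\{v'\}\models\alpha_i$ for all $i$, then $\{v\}\models\beta\Leftrightarrow\{v'\}\models\beta$. $\mathsf{InqL}$: formulas built from $p,\bot,\top$ by $\wedge,\vee,\to$ with the same clauses. A substitution of $\mathsf L$ is a map on $\mathsf L$-formulas commuting with all connectives and atoms; it is flat if each $\sigma(p)$ is flat. For a valuation $v$ and substitution $\sigma$, $v_\sigma$ is the valuation with $v_\sigma(p)=1$ if $\{v\}\models\sigma(p)$ and $v_\sigma(p)=0$ otherwise; for a team $X$, $X_\sigma=\{v_\sigma\mid v\in X\}$. *)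

theory Defs
  imports Main
begin

type_synonym valuation = "nat \<Rightarrow> bool"
type_synonym team = "valuation set"

datatype pt = PTAtom nat | PTBot | PTTop | PTDep "pt list" pt | PTNeg pt
  | PTAnd pt pt | PTTensor pt pt | PTOr pt pt | PTImp pt pt

(* X |= phi -> bot  iff every subteam satisfying phi is empty *)
fun pt_sat :: "team \<Rightarrow> pt \<Rightarrow> bool" where
  "pt_sat X (PTAtom p) = (\<forall>v\<in>X. v p)"
| "pt_sat X PTBot = (X = {})"
| "pt_sat X PTTop = True"
| "pt_sat X (PTDep as b) =
     (\<forall>Y\<subseteq>X. (\<forall>a\<in>set as. pt_sat Y a \<or> (\<forall>Z\<subseteq>Y. pt_sat Z a \<longrightarrow> Z = {}))
        \<longrightarrow> (pt_sat Y b \<or> (\<forall>Z\<subseteq>Y. pt_sat Z b \<longrightarrow> Z = {})))"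
| "pt_sat X (PTNeg f) = (\<forall>v\<in>X. \<not> pt_sat {v} f)"
| "pt_sat X (PTAnd f g) = (pt_sat X f \<and> pt_sat X g)"
| "pt_sat X (PTTensor f g) = (\<exists>Y Z. X = Y \<union> Z \<and> pt_sat Y f \<and> pt_sat Z g)"
| "pt_sat X (PTOr f g) = (pt_sat X f \<or> pt_sat X g)"
| "pt_sat X (PTImp f g) = (\<forall>Y\<subseteq>X. pt_sat Y f \<longrightarrow> pt_sat Y g)"

fun pt_subst :: "(nat \<Rightarrow> pt) \<Rightarrow> pt \<Rightarrow> pt" where
  "pt_subst s (PTAtom p) = s p"
| "pt_subst s PTBot = PTBot"
| "pt_subst s PTTop = PTTop"
| "pt_subst s (PTDep as b) = PTDep (map (pt_subst s) as) (pt_subst s b)"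
| "pt_subst s (PTNeg f) = PTNeg (pt_subst s f)"
| "pt_subst s (PTAnd f g) = PTAnd (pt_subst s f) (pt_subst s g)"
| "pt_subst s (PTTensor f g) = PTTensor (pt_subst s f) (pt_subst s g)"
| "pt_subst s (PTOr f g) = PTOr (pt_subst s f) (pt_subst s g)"
| "pt_subst s (PTImp f g) = PTImp (pt_subst s f) (pt_subst s g)"

definition pt_flat :: "pt \<Rightarrow> bool" where
  "pt_flat f \<longleftrightarrow> (\<forall>X. pt_sat X f \<longleftrightarrow> (\<forall>v\<in>X. pt_sat {v} f))"

datatype pd = PDAtom nat | PDBot | PDTop | PDDep "pd list" pd | PDNeg pd
  | PDAnd pd pd | PDTensor pd pd

fun pd_sat :: "team \<Rightarrow> pd \<Rightarrow> bool" where
  "pd_sat X (PDAtom p) = (\<forall>v\<in>X. v p)"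
| "pd_sat X PDBot = (X = {})"
| "pd_sat X PDTop = True"
| "pd_sat X (PDDep as b) =
     (\<forall>v\<in>X. \<forall>v'\<in>X. (\<forall>a\<in>set as. pd_sat {v} a \<longleftrightarrow> pd_sat {v'} a)
        \<longrightarrow> (pd_sat {v} b \<longleftrightarrow> pd_sat {v'} b))"
| "pd_sat X (PDNeg f) = (\<forall>v\<in>X. \<not> pd_sat {v} f)"
| "pd_sat X (PDAnd f g) = (pd_sat X f \<and> pd_sat X g)"
| "pd_sat X (PDTensor f g) = (\<exists>Y Z. X = Y \<union> Z \<and> pd_sat Y f \<and> pd_sat Z g)"

definition pd_flat :: "pd \<Rightarrow> bool" where
  "pd_flat f \<longleftrightarrow> (\<forall>X. pd_sat X f \<longleftrightarrow> (\<forall>v\<in>X. pd_sat {v} f))"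

fun pd_wf :: "pd \<Rightarrow> bool" where
  "pd_wf (PDDep as b) = ((\<forall>a\<in>set as. pd_wf a \<and> pd_flat a) \<and> pd_wf b \<and> pd_flat b)"
| "pd_wf (PDNeg f) = pd_wf f"
| "pd_wf (PDAnd f g) = (pd_wf f \<and> pd_wf g)"
| "pd_wf (PDTensor f g) = (pd_wf f \<and> pd_wf g)"
| "pd_wf _ = True"

fun pd_subst :: "(nat \<Rightarrow> pd) \<Rightarrow> pd \<Rightarrow> pd" where
  "pd_subst s (PDAtom p) = s p"
| "pd_subst s PDBot = PDBot"
| "pd_subst s PDTop = PDTop"
| "pd_subst s (PDDep as b) = PDDep (map (pd_subst s) as) (pd_subst s b)"
| "pd_subst s (PDNeg f) = PDNeg (pd_subst s f)"
| "pd_subst s (PDAnd f g) = PDAnd (pd_subst s f) (pd_subst s g)"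
| "pd_subst s (PDTensor f g) = PDTensor (pd_subst s f) (pd_subst s g)"

datatype inq = IAtom nat | IBot | ITop | IAnd inq inq | IOr inq inq | IImp inq inq

fun inq_sat :: "team \<Rightarrow> inq \<Rightarrow> bool" where
  "inq_sat X (IAtom p) = (\<forall>v\<in>X. v p)"
| "inq_sat X IBot = (X = {})"
| "inq_sat X ITop = True"
| "inq_sat X (IAnd f g) = (inq_sat X f \<and> inq_sat X g)"
| "inq_sat X (IOr f g) = (inq_sat X f \<or> inq_sat X g)"
| "inq_sat X (IImp f g) = (\<forall>Y\<subseteq>X. inq_sat Y f \<longrightarrow> inq_sat Y g)"

fun inq_subst :: "(nat \<Rightarrow> inq) \<Rightarrow> inq \<Rightarrow> inq" where
  "inq_subst s (IAtom p) = s p"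
| "inq_subst s IBot = IBot"
| "inq_subst s ITop = ITop"
| "inq_subst s (IAnd f g) = IAnd (inq_subst s f) (inq_subst s g)"
| "inq_subst s (IOr f g) = IOr (inq_subst s f) (inq_subst s g)"
| "inq_subst s (IImp f g) = IImp (inq_subst s f) (inq_subst s g)"

definition inq_flat :: "inq \<Rightarrow> bool" where
  "inq_flat f \<longleftrightarrow> (\<forall>X. inq_sat X f \<longleftrightarrow> (\<forall>v\<in>X. inq_sat {v} f))"

definition val_subst :: "(team \<Rightarrow> 'f \<Rightarrow> bool) \<Rightarrow> (nat \<Rightarrow> 'f) \<Rightarrow> valuation \<Rightarrow> valuation" where
  "val_subst sat s v = (\<lambda>p. sat {v} (s p))"

definition team_subst :: "(team \<Rightarrow> 'f \<Rightarrow> bool) \<Rightarrow> (nat \<Rightarrow> 'f) \<Rightarrow> team \<Rightarrow> team" where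
  "team_subst sat s X = val_subst sat s ` X"

end

theory Submission
  imports Defs
begin

lemma img_pre: "Y \<subseteq> f`X \<Longrightarrow> f`(X \<inter> f-`Y) = Y"
  by auto

lemma all_sub_image: "(\<forall>Y'\<subseteq>f`X. P Y') \<longleftrightarrow> (\<forall>Y\<subseteq>X. P (f`Y))"
proof
  assume "\<forall>Y'\<subseteq>f`X. P Y'" thus "\<forall>Y\<subseteq>X. P (f`Y)" by blast
next
  assume H: "\<forall>Y\<subseteq>X. P (f`Y)"
  show "\<forall>Y'\<subseteq>f`X. P Y'"
  proof (intro allI impI)
    fix Y' assume "Y' \<subseteq> f`X"
    hence e: "Y' = f`(X \<inter> f-`Y')" by (simp add: img_pre)
    have "X \<inter> f-`Y' \<subseteq> X" by blast
    hence "P (f`(X \<inter> f-`Y'))" using H by blast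
    thus "P Y'" using e by simp
  qed
qed

lemma ex_split_image: "(\<exists>Y' Z'. f`X = Y' \<union> Z' \<and> P Y' \<and> Q Z') \<longleftrightarrow> (\<exists>Y Z. X = Y \<union> Z \<and> P (f`Y) \<and> Q (f`Z))"
proof
  assume "\<exists>Y' Z'. f`X = Y' \<union> Z' \<and> P Y' \<and> Q Z'"
  then obtain Y' Z' where h: "f`X = Y' \<union> Z'" "P Y'" "Q Z'" by blast
  have a: "X = (X \<inter> f-`Y') \<union> (X \<inter> f-`Z')" using h(1) by auto
  have b: "f`(X \<inter> f-`Y') = Y'" "f`(X \<inter> f-`Z') = Z'" using h(1) by (simp_all add: img_pre)
  have "X = (X \<inter> f-`Y') \<union> (X \<inter> f-`Z') \<and> P (f`(X \<inter> f-`Y')) \<and> Q (f`(X \<inter> f-`Z'))"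
    using a h(2,3) unfolding b by blast
  thus "\<exists>Y Z. X = Y \<union> Z \<and> P (f`Y) \<and> Q (f`Z)" by blast
next
  assume "\<exists>Y Z. X = Y \<union> Z \<and> P (f`Y) \<and> Q (f`Z)"
  then obtain Y Z where "X = Y \<union> Z" "P (f`Y)" "Q (f`Z)" by blast
  hence "f`X = f`Y \<union> f`Z \<and> P (f`Y) \<and> Q (f`Z)" by auto
  thus "\<exists>Y' Z'. f`X = Y' \<union> Z' \<and> P Y' \<and> Q Z'" by blast
qed

lemma pt_main:
  assumes at: "\<And>X p. pt_sat X (s p) = (\<forall>v\<in>X. f v p)"
  shows "pt_sat X (pt_subst s \<phi>) = pt_sat (f`X) \<phi>"
proof (induction \<phi> arbitrary: X)
  case (PTDep as b)
  have e: "\<And>Z. (Z = {}) = (f`Z = {})" by simp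
  have "pt_sat X (pt_subst s (PTDep as b)) =
     (\<forall>Y\<subseteq>X. (\<forall>a\<in>set as. pt_sat (f`Y) a \<or> (\<forall>Z\<subseteq>Y. pt_sat (f`Z) a \<longrightarrow> f`Z = {}))
        \<longrightarrow> (pt_sat (f`Y) b \<or> (\<forall>Z\<subseteq>Y. pt_sat (f`Z) b \<longrightarrow> f`Z = {})))"
    using PTDep by simp
  also have "\<dots> = (\<forall>Y\<subseteq>X. (\<forall>a\<in>set as. pt_sat (f`Y) a \<or> (\<forall>Z\<subseteq>f`Y. pt_sat Z a \<longrightarrow> Z = {}))
        \<longrightarrow> (pt_sat (f`Y) b \<or> (\<forall>Z\<subseteq>f`Y. pt_sat Z b \<longrightarrow> Z = {})))"
    by (simp only: all_sub_image[where P="\<lambda>Z. pt_sat Z _ \<longrightarrow> Z = {}"])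
  also have "\<dots> = pt_sat (f`X) (PTDep as b)"
    by (simp only: pt_sat.simps all_sub_image[where P="\<lambda>Y. (\<forall>a\<in>set as. pt_sat Y a \<or> (\<forall>Z\<subseteq>Y. pt_sat Z a \<longrightarrow> Z = {}))
        \<longrightarrow> (pt_sat Y b \<or> (\<forall>Z\<subseteq>Y. pt_sat Z b \<longrightarrow> Z = {}))"])
  finally show ?case .
next
  case (PTTensor f1 f2) thus ?case by (simp add: ex_split_image[where P="\<lambda>Y. pt_sat Y f1" and Q="\<lambda>Y. pt_sat Y f2"])
next
  case (PTImp f1 f2) thus ?case by (simp add: all_sub_image[where P="\<lambda>Y. pt_sat Y f1 \<longrightarrow> pt_sat Y f2"])
qed (auto simp: at)

lemma inq_main:
  assumes at: "\<And>X p. inq_sat X (s p) = (\<forall>v\<in>X. f v p)"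
  shows "inq_sat X (inq_subst s \<phi>) = inq_sat (f`X) \<phi>"
proof (induction \<phi> arbitrary: X)
  case (IImp f1 f2) thus ?case by (simp add: all_sub_image[where P="\<lambda>Y. inq_sat Y f1 \<longrightarrow> inq_sat Y f2"])
qed (auto simp: at)

lemma pd_main:
  assumes at: "\<And>X p. pd_sat X (s p) = (\<forall>v\<in>X. f v p)"
  shows "pd_sat X (pd_subst s \<phi>) = pd_sat (f`X) \<phi>"
proof (induction \<phi> arbitrary: X)
  case (PDTensor f1 f2) thus ?case by (simp add: ex_split_image[where P="\<lambda>Y. pd_sat Y f1" and Q="\<lambda>Y. pd_sat Y f2"])
next
  case (PDDep as b)
  have "\<And>v a. a \<in> set as \<Longrightarrow> pd_sat {v} (pd_subst s a) = pd_sat {f v} a"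
    using PDDep(1) by (metis image_empty image_insert)
  moreover have "\<And>v. pd_sat {v} (pd_subst s b) = pd_sat {f v} b"
    using PDDep(2) by (metis image_empty image_insert)
  ultimately show ?case by (simp add: ball_simps)
next
  case (PDNeg g)
  have "\<And>v. pd_sat {v} (pd_subst s g) = pd_sat {f v} g"
    using PDNeg by (metis image_empty image_insert)
  thus ?case by simp
qed (auto simp: at)

theorem lemma3p5:
  shows "(\<forall>(\<phi>::pd) s X. pd_wf \<phi> \<and> (\<forall>p. pd_wf (s p) \<and> pd_flat (s p)) \<longrightarrow>
            (pd_sat X (pd_subst s \<phi>) \<longleftrightarrow> pd_sat (team_subst pd_sat s X) \<phi>))
       \<and> (\<forall>(\<phi>::inq) s X. (\<forall>p. inq_flat (s p)) \<longrightarrow>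
            (inq_sat X (inq_subst s \<phi>) \<longleftrightarrow> inq_sat (team_subst inq_sat s X) \<phi>))
       \<and> (\<forall>(\<phi>::pt) s X. (\<forall>p. pt_flat (s p)) \<longrightarrow>
            (pt_sat X (pt_subst s \<phi>) \<longleftrightarrow> pt_sat (team_subst pt_sat s X) \<phi>))"
proof (intro conjI allI impI)
  fix \<phi> :: pd and s :: "nat \<Rightarrow> pd" and X assume "pd_wf \<phi> \<and> (\<forall>p. pd_wf (s p) \<and> pd_flat (s p))"
  hence "\<And>X p. pd_sat X (s p) = (\<forall>v\<in>X. val_subst pd_sat s v p)"
    unfolding val_subst_def pd_flat_def by blast
  thus "pd_sat X (pd_subst s \<phi>) \<longleftrightarrow> pd_sat (team_subst pd_sat s X) \<phi>"
    unfolding team_subst_def by (rule pd_main)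
next
  fix \<phi> :: inq and s :: "nat \<Rightarrow> inq" and X assume "\<forall>p. inq_flat (s p)"
  hence "\<And>X p. inq_sat X (s p) = (\<forall>v\<in>X. val_subst inq_sat s v p)"
    unfolding val_subst_def inq_flat_def by blast
  thus "inq_sat X (inq_subst s \<phi>) \<longleftrightarrow> inq_sat (team_subst inq_sat s X) \<phi>"
    unfolding team_subst_def by (rule inq_main)
next
  fix \<phi> :: pt and s :: "nat \<Rightarrow> pt" and X assume "\<forall>p. pt_flat (s p)"
  hence "\<And>X p. pt_sat X (s p) = (\<forall>v\<in>X. val_subst pt_sat s v p)"
    unfolding val_subst_def pt_flat_def by blast
  thus "pt_sat X (pt_subst s \<phi>) \<longleftrightarrow> pt_sat (team_subst pt_sat s X) \<phi>"
    unfolding team_subst_def by (rule pt_main)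
qed

end
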